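(* For every $j\ge0$, $$\left|\frac{\mathbb E(W_j^+)}{K}-\sum_{\ell\ge j}\mathbb Q_\ell\right|\le \mathbb E\!\left(\min(pv_1,1)\,\frac{v_1}{V}\right).$$
   Context: Uniform urn model. Let $v$ be a random variable with values in the positive integers, let $K\ge 1$, let $v_1,\dots,v_K$ be i.i.d. copies of $v$ and $V=v_1+\dots+v_K$. Fix $p\in(0,1)$, with $pV$ assumed to be an integer. Conditionally on $\mathcal F=\{v_1,\dots,v_K\}$, $pV$ balls are drawn with replacement, independently, each drawn ball having color $i$ with probability $v_i/V$. Let $\tilde v_i$ be the number of drawn balls of color $i$, and for $j\ge0$ let $W_j^+=\sum_{i=1}^K\mathbf 1\{\tilde v_i\ge j\}$. Let $\mathbb Q_j=\mathbb E\big(\frac{(pv)^j}{j!}e^{-pv}\big)$, $j\ge0$. *)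

theory Defs
  imports "HOL-Probability.Probability"
begin

text \<open>Law of (v_1,...,v_K): i.i.d. copies of v with law d, indexed 0..K-1
  (so v_1 of the paper is index 0).\<close>
definition iid_vs :: "nat pmf \<Rightarrow> nat \<Rightarrow> (nat \<Rightarrow> nat) pmf" where
  "iid_vs d K = Pi_pmf {..<K} 0 (\<lambda>_. d)"

definition total_V :: "nat \<Rightarrow> (nat \<Rightarrow> nat) \<Rightarrow> nat" where
  "total_V K vs = (\<Sum>i<K. vs i)"

definition urn_color :: "nat \<Rightarrow> (nat \<Rightarrow> nat) \<Rightarrow> nat pmf" where
  "urn_color K vs = pmf_of_multiset (\<Sum>i<K. replicate_mset (vs i) i)"

text \<open>Number of drawn balls, p V (assumed to be an integer).\<close>
definition n_draws :: "real \<Rightarrow> nat \<Rightarrow> (nat \<Rightarrow> nat) \<Rightarrow> nat" where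
  "n_draws p K vs = nat \<lfloor>p * real (total_V K vs)\<rfloor>"

definition urn_draws :: "real \<Rightarrow> nat \<Rightarrow> (nat \<Rightarrow> nat) \<Rightarrow> (nat \<Rightarrow> nat) pmf" where
  "urn_draws p K vs = Pi_pmf {..<n_draws p K vs} 0 (\<lambda>_. urn_color K vs)"

definition urn_experiment :: "nat pmf \<Rightarrow> nat \<Rightarrow> real \<Rightarrow> ((nat \<Rightarrow> nat) \<times> (nat \<Rightarrow> nat)) pmf" where
  "urn_experiment d K p = do { vs \<leftarrow> iid_vs d K; dr \<leftarrow> urn_draws p K vs; return_pmf (vs, dr) }"

definition tilde_v :: "real \<Rightarrow> nat \<Rightarrow> (nat \<Rightarrow> nat) \<Rightarrow> (nat \<Rightarrow> nat) \<Rightarrow> nat \<Rightarrow> nat" where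
  "tilde_v p K vs dr i = card {b. b < n_draws p K vs \<and> dr b = i}"

definition W_plus :: "real \<Rightarrow> nat \<Rightarrow> nat \<Rightarrow> (nat \<Rightarrow> nat) \<Rightarrow> (nat \<Rightarrow> nat) \<Rightarrow> nat" where
  "W_plus p K j vs dr = card {i. i < K \<and> tilde_v p K vs dr i \<ge> j}"

definition Q :: "nat pmf \<Rightarrow> real \<Rightarrow> nat \<Rightarrow> real" where
  "Q d p j = measure_pmf.expectation d (\<lambda>v. (p * real v) ^ j / fact j * exp (- p * real v))"

end

theory Submission
  imports Defs
begin


definition poi :: "real \<Rightarrow> nat \<Rightarrow> real" where
  "poi lam k = exp (- lam) * lam ^ k / fact k"

definition Fl :: "real \<Rightarrow> nat \<Rightarrow> real" where
  "Fl lam m = (\<Sum>l<m. poi lam l)"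

lemma poi_pos: "lam > 0 \<Longrightarrow> poi lam k > 0"
  by (simp add: poi_def)

lemma poi_Suc: "poi lam (Suc k) = poi lam k * lam / real (Suc k)"
  by (simp add: poi_def field_simps)

lemma poi_sums: "(\<lambda>k. poi lam k) sums 1"
proof -
  have "(\<lambda>k. exp (- lam) * (lam ^ k / fact k)) sums (exp (- lam) * exp lam)"
    using exp_converges[of lam] by (intro sums_mult) (simp add: divide_inverse mult.commute)
  then show ?thesis by (simp add: poi_def exp_minus field_simps)
qed

lemma poi_tail_sums: "(\<lambda>l. poi lam (l + m)) sums (1 - Fl lam m)"
  using sums_iff_shift[of "poi lam" m "1 - Fl lam m"] poi_sums unfolding Fl_def by simp

lemma tail_nonneg: "lam > 0 \<Longrightarrow> 1 - Fl lam m \<ge> 0"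
  using sums_le[OF _ sums_zero poi_tail_sums[of lam m]] poi_pos[of lam] by (auto intro: less_imp_le)

lemma tail_mono:
  assumes "lam > 0" "k \<ge> 1"
  shows "1 - Fl lam (Suc k) \<le> (lam / k) * (1 - Fl lam k)"
proof -
  have s1: "(\<lambda>l. poi lam (l + Suc k)) sums (1 - Fl lam (Suc k))" by (rule poi_tail_sums)
  have s2: "(\<lambda>l. (lam / k) * poi lam (l + k)) sums ((lam / k) * (1 - Fl lam k))"
    by (intro sums_mult poi_tail_sums)
  have "poi lam (l + Suc k) \<le> (lam / k) * poi lam (l + k)" for l
  proof -
    have "poi lam (l + Suc k) = poi lam (l + k) * (lam / real (Suc (l + k)))"
      by (simp add: poi_Suc)
    also have "\<dots> \<le> poi lam (l + k) * (lam / k)"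
      using assms poi_pos[of lam "l+k"]
      by (intro mult_left_mono divide_left_mono) auto
    finally show ?thesis by (simp add: mult.commute)
  qed
  then show ?thesis using sums_le[OF _ s1 s2] by blast
qed

lemma Fl_ratio_mono:
  assumes "lam > 0" "k \<ge> 1"
  shows "Fl lam k / poi lam (k - 1) \<le> Fl lam (Suc k) / poi lam k"
proof -
  obtain r where k: "k = Suc r" using assms by (cases k) auto
  have "(\<Sum>l<k. poi lam l * (lam / k)) \<le> (\<Sum>l<k. poi lam (Suc l))"
  proof (intro sum_mono)
    fix l assume "l \<in> {..<k}"
    then show "poi lam l * (lam / k) \<le> poi lam (Suc l)"
      using assms poi_pos[of lam l] unfolding poi_Suc
      by (simp add: mult_left_mono divide_left_mono)
  qed
  also have "\<dots> \<le> Fl lam (Suc k)"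
    unfolding Fl_def sum.lessThan_Suc_shift using poi_pos[OF assms(1), of 0] by simp
  finally have "Fl lam k * (lam / k) \<le> Fl lam (Suc k)"
    unfolding Fl_def sum_distrib_right .
  moreover have "poi lam k = poi lam (k - 1) * (lam / k)"
    using poi_Suc[of lam r] k by simp
  ultimately have "Fl lam k * poi lam k \<le> Fl lam (Suc k) * poi lam (k - 1)"
  proof -
    assume h1: "Fl lam k * (lam / k) \<le> Fl lam (Suc k)" and h2: "poi lam k = poi lam (k - 1) * (lam / k)"
    have "Fl lam k * poi lam k = (Fl lam k * (lam / k)) * poi lam (k - 1)" using h2 by simp
    also have "\<dots> \<le> Fl lam (Suc k) * poi lam (k - 1)"
      using h1 poi_pos[OF assms(1), of "k - 1"] by (intro mult_right_mono) auto
    finally show ?thesis .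
  qed
  then show ?thesis using poi_pos[OF assms(1), of "k - 1"] poi_pos[OF assms(1), of k]
    by (simp add: divide_simps)
qed

definition gS :: "real \<Rightarrow> nat \<Rightarrow> nat \<Rightarrow> real" where
  "gS lam i m = (case m of 0 \<Rightarrow> 0 | Suc r \<Rightarrow>
     (if r < i then - poi lam i * Fl lam (Suc r) / (lam * poi lam r)
      else poi lam i * (1 - Fl lam (Suc r)) / (lam * poi lam r)))"

lemma Fl_Suc: "Fl lam (Suc m) = Fl lam m + poi lam m"
  by (simp add: Fl_def)

lemma stein_eq:
  assumes "lam > 0"
  shows "lam * gS lam i (Suc k) - real k * gS lam i k = (if k = i then 1 else 0) - poi lam i"
proof (cases k)
  case 0
  then show ?thesis using poi_pos[OF assms, of 0] assms
    by (cases i) (auto simp: gS_def Fl_def field_simps)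
next
  case (Suc r)
  have a: "poi lam r > 0" using poi_pos[OF assms] .
  have b: "poi lam (Suc r) = poi lam r * lam / real (Suc r)" by (rule poi_Suc)
  have bpos: "poi lam (Suc r) > 0" using poi_pos[OF assms] .
  have key: "real (Suc r) / (lam * poi lam r) = 1 / poi lam (Suc r)"
    using a assms b bpos by (simp add: field_simps)
  have e1: "real (Suc r) * (X / (lam * poi lam r)) = X / poi lam (Suc r)" for X
    using key by (metis times_divide_eq_left times_divide_eq_right mult.commute divide_divide_eq_left mult_1_right)
  have e2: "lam * (X / (lam * poi lam (Suc r))) = X / poi lam (Suc r)" for X
    using assms by (simp add: field_simps)
  have g1: "gS lam i (Suc (Suc r)) = (if Suc r < i then - poi lam i * Fl lam (Suc (Suc r)) / (lam * poi lam (Suc r))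
      else poi lam i * (1 - Fl lam (Suc (Suc r))) / (lam * poi lam (Suc r)))"
    by (simp add: gS_def)
  have g2: "gS lam i (Suc r) = (if r < i then - poi lam i * Fl lam (Suc r) / (lam * poi lam r)
      else poi lam i * (1 - Fl lam (Suc r)) / (lam * poi lam r))"
    by (simp add: gS_def)
  have L: "lam * gS lam i (Suc k) - real k * gS lam i k = lam * gS lam i (Suc (Suc r)) - real (Suc r) * gS lam i (Suc r)"
    using Suc by simp
  have F: "Fl lam (Suc (Suc r)) = Fl lam (Suc r) + poi lam (Suc r)" by (rule Fl_Suc)
  consider "Suc r < i" | "Suc r = i" | "i < Suc r" by linarith
  then show ?thesis
  proof cases
    case 1
    then have "lam * gS lam i (Suc k) - real k * gS lam i k
       = - poi lam i * Fl lam (Suc (Suc r)) / poi lam (Suc r) + poi lam i * Fl lam (Suc r) / poi lam (Suc r)"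
      unfolding L g1 g2 using e1 e2 assms by simp
    also have "\<dots> = - poi lam i" using bpos unfolding F by (simp add: field_simps)
    finally show ?thesis using 1 Suc by simp
  next
    case 2
    then have "lam * gS lam i (Suc k) - real k * gS lam i k
       = poi lam i * (1 - Fl lam (Suc (Suc r))) / poi lam (Suc r) + poi lam i * Fl lam (Suc r) / poi lam (Suc r)"
      unfolding L g1 g2 using e1 e2 assms by simp
    also have "\<dots> = 1 - poi lam i" using bpos 2 unfolding F by (simp add: field_simps)
    finally show ?thesis using 2 Suc by simp
  next
    case 3
    then have "lam * gS lam i (Suc k) - real k * gS lam i k
       = poi lam i * (1 - Fl lam (Suc (Suc r))) / poi lam (Suc r) - poi lam i * (1 - Fl lam (Suc r)) / poi lam (Suc r)"
      unfolding L g1 g2 using e1 e2 assms by simp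
    also have "\<dots> = - poi lam i" using bpos unfolding F by (simp add: field_simps)
    finally show ?thesis using 3 Suc by simp
  qed
qed


lemma Fl_shift_lower:
  assumes "lam > 0" "k \<ge> 1"
  shows "Fl lam k * (lam / k) \<le> Fl lam (Suc k) - poi lam 0"
proof -
  have "(\<Sum>l<k. poi lam l * (lam / k)) \<le> (\<Sum>l<k. poi lam (Suc l))"
  proof (intro sum_mono)
    fix l assume "l \<in> {..<k}"
    then show "poi lam l * (lam / k) \<le> poi lam (Suc l)"
      using assms poi_pos[of lam l] unfolding poi_Suc
      by (simp add: mult_left_mono divide_left_mono)
  qed
  also have "\<dots> = Fl lam (Suc k) - poi lam 0"
    unfolding Fl_def sum.lessThan_Suc_shift by simp
  finally show ?thesis unfolding Fl_def sum_distrib_right .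
qed

lemma poi_pred: "k \<ge> 1 \<Longrightarrow> poi lam k = poi lam (k - 1) * (lam / k)"
  using poi_Suc[of lam "k - 1"] by (cases k) auto

lemma gS_Suc: "gS lam i (Suc r) = (if r < i then - poi lam i * Fl lam (Suc r) / (lam * poi lam r)
      else poi lam i * (1 - Fl lam (Suc r)) / (lam * poi lam r))"
  by (simp add: gS_def)

lemma gS_dec:
  assumes "lam > 0" "k \<ge> 1" "i \<noteq> k"
  shows "gS lam i (Suc k) \<le> gS lam i k"
proof -
  obtain r where k: "k = Suc r" using assms by (cases k) auto
  have pr: "poi lam r > 0" "poi lam k > 0" using poi_pos[OF assms(1)] by auto
  have pk: "poi lam k = poi lam r * (lam / k)" using poi_pred[OF assms(2), of lam] k by simp
  show ?thesis
  proof (cases "k < i")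
    case True
    then have r: "r < i" using k by simp
    have m: "Fl lam k / poi lam r \<le> Fl lam (Suc k) / poi lam k"
      using Fl_ratio_mono[OF assms(1,2)] k by simp
    have "gS lam i (Suc k) = - (poi lam i / lam) * (Fl lam (Suc k) / poi lam k)"
      unfolding gS_Suc using True by simp
    also have "\<dots> \<le> - (poi lam i / lam) * (Fl lam k / poi lam r)"
      using m poi_pos[OF assms(1), of i] assms(1) by (intro mult_left_mono_neg) auto
    also have "\<dots> = gS lam i k"
      unfolding k gS_Suc using r by (simp add: k)
    finally show ?thesis .
  next
    case False
    then have r: "\<not> r < i" using k assms(3) by simp
    have t: "1 - Fl lam (Suc k) \<le> (lam / k) * (1 - Fl lam k)"
      using tail_mono[OF assms(1,2)] .
    have m: "(1 - Fl lam (Suc k)) / poi lam k \<le> (1 - Fl lam k) / poi lam r"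
    proof -
      have "(1 - Fl lam (Suc k)) / poi lam k \<le> ((lam / k) * (1 - Fl lam k)) / poi lam k"
        using t pr by (intro divide_right_mono) auto
      also have "\<dots> = (1 - Fl lam k) / poi lam r"
        unfolding pk using assms pr by (simp add: field_simps)
      finally show ?thesis .
    qed
    have "gS lam i (Suc k) = (poi lam i / lam) * ((1 - Fl lam (Suc k)) / poi lam k)"
      unfolding gS_Suc using False by simp
    also have "\<dots> \<le> (poi lam i / lam) * ((1 - Fl lam k) / poi lam r)"
      using m poi_pos[OF assms(1), of i] assms(1) by (intro mult_left_mono) auto
    also have "\<dots> = gS lam i k"
      unfolding k gS_Suc using r by (simp add: k)
    finally show ?thesis .
  qed
qed

lemma gS_diag:
  assumes "lam > 0" "k \<ge> 1"
  shows "gS lam k (Suc k) - gS lam k k \<le> (1 - exp (- lam)) / lam"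
proof -
  obtain r where k: "k = Suc r" using assms by (cases k) auto
  have pr: "poi lam r > 0" "poi lam k > 0" using poi_pos[OF assms(1)] by auto
  have pk: "poi lam k = poi lam r * (lam / k)" using poi_pred[OF assms(2), of lam] k by simp
  have e1: "gS lam k (Suc k) = (1 - Fl lam (Suc k)) / lam"
    unfolding gS_Suc using pr by simp
  have e2a: "gS lam k k = - poi lam k * Fl lam k / (lam * poi lam r)"
    using k by (simp add: gS_Suc)
  have e2: "gS lam k k = - Fl lam k / k"
    unfolding e2a pk using pr assms by (simp add: field_simps)
  have L: "Fl lam k * (lam / k) \<le> Fl lam (Suc k) - poi lam 0" by (rule Fl_shift_lower[OF assms])
  have p0: "poi lam 0 = exp (- lam)" by (simp add: poi_def)
  have "gS lam k (Suc k) - gS lam k k = (1 - Fl lam (Suc k) + Fl lam k * (lam / k)) / lam"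
    unfolding e1 e2 using assms by (simp add: field_simps)
  also have "\<dots> \<le> (1 - poi lam 0) / lam"
    using L assms by (intro divide_right_mono) auto
  finally show ?thesis unfolding p0 .
qed

lemma sum_split_if:
  "(\<Sum>i<N. if r < i then a * poi lam i else b * poi lam i)
     = b * Fl lam (min N (Suc r)) + a * (Fl lam N - Fl lam (min N (Suc r)))"
proof (induction N)
  case 0 then show ?case by (simp add: Fl_def)
next
  case (Suc N)
  show ?case
  proof (cases "N \<le> r")
    case True
    then have "min (Suc N) (Suc r) = Suc N" "min N (Suc r) = N" by auto
    then show ?thesis using Suc True by (simp add: Fl_Suc algebra_simps)
  next
    case False
    then have "min (Suc N) (Suc r) = Suc r" "min N (Suc r) = Suc r" by auto
    then show ?thesis using Suc False by (simp add: Fl_Suc algebra_simps)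
  qed
qed

lemma sum_gS:
  assumes "lam > 0" "r < N"
  shows "(\<Sum>i<N. gS lam i (Suc r)) = Fl lam (Suc r) * (1 - Fl lam N) / (lam * poi lam r)"
proof -
  have "(\<Sum>i<N. gS lam i (Suc r)) = (\<Sum>i<N. if r < i then (- Fl lam (Suc r) / (lam * poi lam r)) * poi lam i
        else ((1 - Fl lam (Suc r)) / (lam * poi lam r)) * poi lam i)"
    unfolding gS_Suc by (intro sum.cong refl) auto
  also have "\<dots> = ((1 - Fl lam (Suc r)) / (lam * poi lam r)) * Fl lam (Suc r)
      + (- Fl lam (Suc r) / (lam * poi lam r)) * (Fl lam N - Fl lam (Suc r))"
  proof -
    have "min N (Suc r) = Suc r" using assms by simp
    then show ?thesis unfolding sum_split_if using assms poi_pos[OF assms(1), of r] by (simp add: field_simps)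
  qed
  also have "\<dots> = Fl lam (Suc r) * (1 - Fl lam N) / (lam * poi lam r)"
    using assms poi_pos[OF assms(1), of r] by (simp add: field_simps)
  finally show ?thesis .
qed

lemma sum_dgS_nonneg:
  assumes "lam > 0" "k \<ge> 1" "k < N"
  shows "(\<Sum>i<N. gS lam i (Suc k) - gS lam i k) \<ge> 0"
proof -
  obtain r where k: "k = Suc r" using assms by (cases k) auto
  have pr: "poi lam r > 0" "poi lam k > 0" using poi_pos[OF assms(1)] by auto
  have m: "Fl lam k / poi lam r \<le> Fl lam (Suc k) / poi lam k"
    using Fl_ratio_mono[OF assms(1,2)] k by simp
  have s1: "(\<Sum>i<N. gS lam i (Suc k)) = Fl lam (Suc k) * (1 - Fl lam N) / (lam * poi lam k)"
    using assms by (intro sum_gS) auto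
  have s2: "(\<Sum>i<N. gS lam i (Suc r)) = Fl lam (Suc r) * (1 - Fl lam N) / (lam * poi lam r)"
    using assms k by (intro sum_gS) auto
  have "(\<Sum>i<N. gS lam i (Suc k) - gS lam i k) = (\<Sum>i<N. gS lam i (Suc k)) - (\<Sum>i<N. gS lam i (Suc r))"
    by (simp add: sum_subtractf k)
  also have "\<dots> = ((1 - Fl lam N) / lam) * (Fl lam (Suc k) / poi lam k - Fl lam k / poi lam r)"
    unfolding s1 s2 using assms pr unfolding k[symmetric] by (simp add: field_simps)
  also have "\<dots> \<ge> 0"
    using m tail_nonneg[OF assms(1), of N] assms(1) by (intro mult_nonneg_nonneg) auto
  finally show ?thesis .
qed

lemma D_bound:
  assumes "lam > 0" "k \<ge> 1"
  shows "\<bar>\<Sum>i<j. gS lam i (Suc k) - gS lam i k\<bar> \<le> (1 - exp (- lam)) / lam"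
proof -
  let ?d = "\<lambda>i. gS lam i (Suc k) - gS lam i k"
  have neg: "?d i \<le> 0" if "i \<noteq> k" for i using gS_dec[OF assms that] by simp
  have diag: "?d k \<le> (1 - exp (- lam)) / lam" by (rule gS_diag[OF assms])
  have bnd: "0 \<le> (1 - exp (- lam)) / lam" using assms by simp
  show ?thesis
  proof (cases "k < j")
    case True
    have lo: "(\<Sum>i<j. ?d i) \<ge> 0" by (rule sum_dgS_nonneg[OF assms True])
    have "(\<Sum>i<j. ?d i) = ?d k + (\<Sum>i\<in>{..<j} - {k}. ?d i)"
      using True by (subst sum.remove[of _ k]) auto
    also have "\<dots> \<le> ?d k + 0"
      using neg by (intro add_left_mono sum_nonpos) auto
    finally show ?thesis using lo diag by simp
  next
    case False
    have up: "(\<Sum>i<j. ?d i) \<le> 0" using neg False by (intro sum_nonpos) auto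
    have "0 \<le> (\<Sum>i<Suc k. ?d i)" by (rule sum_dgS_nonneg[OF assms]) simp
    also have "(\<Sum>i<Suc k. ?d i) = (\<Sum>i<j. ?d i) + (\<Sum>i\<in>{j..<k}. ?d i) + ?d k"
    proof -
      have e: "{..<Suc k} = insert k ({..<j} \<union> {j..<k})" using False by auto
      have "(\<Sum>i\<in>insert k ({..<j} \<union> {j..<k}). ?d i) = ?d k + (\<Sum>i\<in>{..<j} \<union> {j..<k}. ?d i)"
        using False by (intro sum.insert) auto
      also have "(\<Sum>i\<in>{..<j} \<union> {j..<k}. ?d i) = (\<Sum>i<j. ?d i) + (\<Sum>i\<in>{j..<k}. ?d i)"
        by (intro sum.union_disjoint) auto
      finally show ?thesis unfolding e by simp
    qed
    also have "\<dots> \<le> (\<Sum>i<j. ?d i) + 0 + ?d k"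
      using neg by (intro add_right_mono add_left_mono sum_nonpos) auto
    finally show ?thesis using up diag by simp
  qed
qed


definition bn :: "nat \<Rightarrow> real \<Rightarrow> nat \<Rightarrow> real" where
  "bn n q k = real (n choose k) * q ^ k * (1 - q) ^ (n - k)"

lemma bn_sum: "(\<Sum>k\<le>n. bn n q k) = 1"
  using binomial_ring[of q "1 - q" n] by (simp add: bn_def atLeast0AtMost)

lemma bn_pascal:
  "bn (Suc m) q k = (1 - q) * bn m q k + q * (if k = 0 then 0 else bn m q (k - 1))"
proof (cases k)
  case 0 then show ?thesis by (simp add: bn_def)
next
  case (Suc k')
  show ?thesis
  proof (cases "Suc k' \<le> m")
    case True
    then have e: "m - k' = Suc (m - Suc k')" by simp
    show ?thesis using Suc e by (simp add: bn_def algebra_simps)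
  next
    case False
    then have "m choose Suc k' = 0" by simp
    moreover have "m - k' = 0 \<or> m = k'" using False by auto
    ultimately show ?thesis using Suc False by (auto simp: bn_def algebra_simps)
  qed
qed

lemma bn_L1:
  "(\<Sum>k\<le>Suc m. bn (Suc m) q k * g k) = (\<Sum>k\<le>m. bn m q k * ((1 - q) * g k + q * g (Suc k)))"
proof -
  have "(\<Sum>k\<le>Suc m. bn (Suc m) q k * g k)
     = (\<Sum>k\<le>Suc m. (1 - q) * (bn m q k * g k) + q * ((if k = 0 then 0 else bn m q (k - 1)) * g k))"
    by (intro sum.cong refl) (simp only: bn_pascal algebra_simps)
  also have "\<dots> = (1 - q) * (\<Sum>k\<le>Suc m. bn m q k * g k) + q * (\<Sum>k\<le>Suc m. (if k = 0 then 0 else bn m q (k - 1)) * g k)"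
    by (simp only: sum.distrib sum_distrib_left)
  also have "(\<Sum>k\<le>Suc m. bn m q k * g k) = (\<Sum>k\<le>m. bn m q k * g k)"
    by (simp add: bn_def)
  also have "(\<Sum>k\<le>Suc m. (if k = 0 then 0 else bn m q (k - 1)) * g k) = (\<Sum>k\<le>m. bn m q k * g (Suc k))"
    by (subst sum.atMost_Suc_shift) simp
  also have "(1 - q) * (\<Sum>k\<le>m. bn m q k * g k) + q * (\<Sum>k\<le>m. bn m q k * g (Suc k))
      = (\<Sum>k\<le>m. bn m q k * ((1 - q) * g k + q * g (Suc k)))"
    unfolding sum_distrib_left sum.distrib[symmetric] by (intro sum.cong refl) (simp add: algebra_simps)
  finally show ?thesis .
qed

lemma bn_L2:
  "(\<Sum>k\<le>Suc m. bn (Suc m) q k * (real k * f k)) = real (Suc m) * q * (\<Sum>k\<le>m. bn m q k * f (Suc k))"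
proof -
  have "(\<Sum>k\<le>Suc m. bn (Suc m) q k * (real k * f k)) = (\<Sum>k\<le>m. bn (Suc m) q (Suc k) * (real (Suc k) * f (Suc k)))"
    by (subst sum.atMost_Suc_shift) simp
  also have "\<dots> = (\<Sum>k\<le>m. real (Suc m) * q * (bn m q k * f (Suc k)))"
  proof (intro sum.cong refl)
    fix k assume "k \<in> {..m}"
    have c: "real (Suc k) * real (Suc m choose Suc k) = real (Suc m) * real (m choose k)"
      using Suc_times_binomial[of k m] by (metis of_nat_mult)
    have "bn (Suc m) q (Suc k) * (real (Suc k) * f (Suc k))
        = (real (Suc k) * real (Suc m choose Suc k)) * q ^ Suc k * (1 - q) ^ (m - k) * f (Suc k)"
      by (simp add: bn_def algebra_simps)
    also have "\<dots> = real (Suc m) * q * (bn m q k * f (Suc k))"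
      unfolding c by (simp add: bn_def algebra_simps)
    finally show "bn (Suc m) q (Suc k) * (real (Suc k) * f (Suc k)) = real (Suc m) * q * (bn m q k * f (Suc k))" .
  qed
  finally show ?thesis by (simp add: sum_distrib_left)
qed

lemma bn_stein:
  assumes "lam = real (Suc m) * q"
  shows "(\<Sum>k\<le>Suc m. bn (Suc m) q k * (lam * f (Suc k) - real k * f k))
       = lam * q * (\<Sum>k\<le>m. bn m q k * (f (Suc (Suc k)) - f (Suc k)))"
proof -
  have "(\<Sum>k\<le>Suc m. bn (Suc m) q k * (lam * f (Suc k) - real k * f k))
      = lam * (\<Sum>k\<le>Suc m. bn (Suc m) q k * f (Suc k)) - (\<Sum>k\<le>Suc m. bn (Suc m) q k * (real k * f k))"
    by (simp add: algebra_simps sum_subtractf sum_distrib_left)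
  also have "\<dots> = lam * (\<Sum>k\<le>m. bn m q k * ((1 - q) * f (Suc k) + q * f (Suc (Suc k))))
        - lam * (\<Sum>k\<le>m. bn m q k * f (Suc k))"
    apply (subst bn_L2) apply (subst bn_L1) apply (simp add: assms)
    done
  also have "\<dots> = lam * q * (\<Sum>k\<le>m. bn m q k * (f (Suc (Suc k)) - f (Suc k)))"
    by (simp add: algebra_simps sum_subtractf sum_distrib_left sum.distrib)
  finally show ?thesis .
qed

lemma bn_nonneg: "0 \<le> q \<Longrightarrow> q \<le> 1 \<Longrightarrow> bn n q k \<ge> 0"
  by (simp add: bn_def)

lemma binom_poisson_tail:
  assumes q: "0 < q" "q \<le> 1" and n: "n \<ge> 1"
  shows "\<bar>(\<Sum>k\<le>n. bn n q k * (if j \<le> k then 1 else 0)) - (1 - Fl (real n * q) j)\<bar>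
           \<le> q * (1 - exp (- (real n * q)))"
proof -
  obtain m where m: "n = Suc m" using n by (cases n) auto
  define lam where "lam = real n * q"
  have lam: "lam > 0" using q n by (simp add: lam_def)
  define G where "G = (\<lambda>k. \<Sum>i<j. gS lam i k)"
  have stG: "lam * G (Suc k) - real k * G k = (if k < j then 1 else 0) - Fl lam j" for k
  proof -
    have "lam * G (Suc k) - real k * G k = (\<Sum>i<j. lam * gS lam i (Suc k) - real k * gS lam i k)"
      by (simp add: G_def sum_distrib_left sum_subtractf)
    also have "\<dots> = (\<Sum>i<j. (if k = i then 1 else 0) - poi lam i)"
      using stein_eq[OF lam] by simp
    also have "\<dots> = (if k < j then 1 else 0) - Fl lam j"
      by (simp add: sum_subtractf Fl_def)
    finally show ?thesis .
  qed
  have "(\<Sum>k\<le>n. bn n q k * (if j \<le> k then 1 else 0)) - (1 - Fl lam j)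
      = - (\<Sum>k\<le>n. bn n q k * ((if k < j then 1 else 0) - Fl lam j))"
  proof -
    have "(\<Sum>k\<le>n. bn n q k * (if j \<le> k then 1 else 0)) = (\<Sum>k\<le>n. bn n q k * (1 - (if k < j then 1 else 0)))"
      by (intro sum.cong refl) auto
    moreover have "(\<Sum>k\<le>n. Fl lam j * bn n q k) = Fl lam j" using bn_sum[of n q] by (simp add: sum_distrib_left[symmetric])
    ultimately show ?thesis using bn_sum[of n q]
      by (simp add: algebra_simps sum_subtractf sum_distrib_left sum_distrib_right[symmetric])
  qed
  also have "(\<Sum>k\<le>n. bn n q k * ((if k < j then 1 else 0) - Fl lam j))
      = lam * q * (\<Sum>k\<le>m. bn m q k * (G (Suc (Suc k)) - G (Suc k)))"
    unfolding stG[symmetric] m by (rule bn_stein) (simp add: lam_def m)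
  finally have eq: "(\<Sum>k\<le>n. bn n q k * (if j \<le> k then 1 else 0)) - (1 - Fl lam j)
      = - (lam * q * (\<Sum>k\<le>m. bn m q k * (G (Suc (Suc k)) - G (Suc k))))" .
  have Db: "\<bar>G (Suc (Suc k)) - G (Suc k)\<bar> \<le> (1 - exp (- lam)) / lam" for k
    using D_bound[OF lam, of "Suc k" j] by (simp add: G_def sum_subtractf)
  have "\<bar>\<Sum>k\<le>m. bn m q k * (G (Suc (Suc k)) - G (Suc k))\<bar> \<le> (\<Sum>k\<le>m. bn m q k * ((1 - exp (- lam)) / lam))"
  proof -
    have "\<bar>\<Sum>k\<le>m. bn m q k * (G (Suc (Suc k)) - G (Suc k))\<bar> \<le> (\<Sum>k\<le>m. \<bar>bn m q k * (G (Suc (Suc k)) - G (Suc k))\<bar>)"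
      by (rule sum_abs)
    also have "\<dots> \<le> (\<Sum>k\<le>m. bn m q k * ((1 - exp (- lam)) / lam))"
    proof (intro sum_mono)
      fix k assume "k \<in> {..m}"
      have b0: "bn m q k \<ge> 0" using bn_nonneg[OF less_imp_le[OF q(1)] q(2)] .
      show "\<bar>bn m q k * (G (Suc (Suc k)) - G (Suc k))\<bar> \<le> bn m q k * ((1 - exp (- lam)) / lam)"
        unfolding abs_mult abs_of_nonneg[OF b0] using Db[of k] b0 by (rule mult_left_mono)
    qed
    finally show ?thesis .
  qed
  also have "\<dots> = (1 - exp (- lam)) / lam"
    using bn_sum[of m q] by (simp only: sum_distrib_right[symmetric])
  finally have "\<bar>\<Sum>k\<le>m. bn m q k * (G (Suc (Suc k)) - G (Suc k))\<bar> \<le> (1 - exp (- lam)) / lam" .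
  then have "\<bar>lam * q * (\<Sum>k\<le>m. bn m q k * (G (Suc (Suc k)) - G (Suc k)))\<bar> \<le> lam * q * ((1 - exp (- lam)) / lam)"
  proof -
    assume h: "\<bar>\<Sum>k\<le>m. bn m q k * (G (Suc (Suc k)) - G (Suc k))\<bar> \<le> (1 - exp (- lam)) / lam"
    have lq: "lam * q \<ge> 0" using lam q by simp
    show ?thesis unfolding abs_mult[of "lam * q"] abs_of_nonneg[OF lq] using h lq by (rule mult_left_mono)
  qed
  also have "\<dots> = q * (1 - exp (- lam))" using lam by simp
  finally show ?thesis using eq unfolding lam_def by simp
qed



lemma pmf_integrable_bounded:
  fixes f :: "'a \<Rightarrow> real"
  assumes "\<And>x. x \<in> set_pmf M \<Longrightarrow> \<bar>f x\<bar> \<le> B"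
  shows "integrable (measure_pmf M) f"
  using assms by (intro measure_pmf.integrable_const_bound[where B=B]) (auto simp: AE_measure_pmf_iff)

lemma pmf_integral_cong:
  fixes f g :: "'a \<Rightarrow> real"
  assumes "\<And>x. x \<in> set_pmf M \<Longrightarrow> f x = g x"
  shows "measure_pmf.expectation M f = measure_pmf.expectation M g"
  using assms by (intro integral_cong_AE) (auto simp: AE_measure_pmf_iff)

lemma expectation_bind_pmf_bounded:
  fixes f :: "'b \<Rightarrow> real"
  assumes "\<And>y. \<bar>f y\<bar> \<le> B"
  shows "measure_pmf.expectation (bind_pmf M N) f = measure_pmf.expectation M (\<lambda>x. measure_pmf.expectation (N x) f)"
  unfolding measure_pmf_bind
  by (rule integral_bind[where K="count_space UNIV" and B=B and B'=1])
     (auto simp: assms measure_pmf.emeasure_space_1 measure_pmf.prob_space_axioms prob_space_imp_subprob_space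
        space_subprob_algebra
        intro!: measure_pmf.finite_measure_axioms measurable_pmf_measure1)

lemma map_eq_bernoulli:
  "map_pmf (\<lambda>x. x = i) c = bernoulli_pmf (pmf c i)"
proof (rule pmf_eqI)
  fix b :: bool
  have "pmf (map_pmf (\<lambda>x. x = i) c) True = pmf c i"
    by (simp add: pmf_map measure_pmf_single vimage_def)
  moreover have "pmf (map_pmf (\<lambda>x. x = i) c) False = 1 - pmf c i"
  proof -
    have "pmf (map_pmf (\<lambda>x. x = i) c) False = measure_pmf.prob c (UNIV - {i})"
      by (simp add: pmf_map vimage_def Compl_eq_Diff_UNIV[symmetric] Compl_eq)
    also have "\<dots> = 1 - pmf c i"
      using measure_pmf.prob_compl[of "{i}" c] by (simp add: measure_pmf_single)
    finally show ?thesis .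
  qed
  ultimately show "pmf (map_pmf (\<lambda>x. x = i) c) b = pmf (bernoulli_pmf (pmf c i)) b"
    by (cases b) (auto simp: pmf_le_1)
qed


lemma total_V_ge:
  assumes "\<forall>l<K. vs l \<ge> 1" "i < K"
  shows "vs i \<le> total_V K vs"
  unfolding total_V_def using assms by (intro member_le_sum) auto

lemma urn_color_pmf:
  assumes "\<forall>l<K. vs l \<ge> 1" "i < K"
  shows "pmf (urn_color K vs) i = real (vs i) / real (total_V K vs)"
proof -
  define M where "M = (\<Sum>l<K. replicate_mset (vs l) l)"
  have cnt: "count M i = vs i"
  proof -
    have "count M i = (\<Sum>l<K. count (replicate_mset (vs l) l) i)"
      unfolding M_def by (simp add: count_sum)
    also have "\<dots> = (\<Sum>l\<in>{i}. vs l)"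
      using assms by (intro sum.mono_neutral_cong_right) auto
    finally show ?thesis by simp
  qed
  have sz: "size M = total_V K vs" unfolding M_def total_V_def by simp
  have ne: "M \<noteq> {#}" using cnt assms by (metis count_empty not_one_le_zero)
  show ?thesis unfolding urn_color_def M_def[symmetric] using ne cnt sz by simp
qed

lemma tilde_dist:
  assumes "\<forall>l<K. vs l \<ge> 1" "i < K"
  shows "map_pmf (\<lambda>dr. tilde_v p K vs dr i) (urn_draws p K vs)
       = binomial_pmf (n_draws p K vs) (real (vs i) / real (total_V K vs))"
proof -
  define c where "c = urn_color K vs"
  define n where "n = n_draws p K vs"
  have "map_pmf (\<lambda>dr. tilde_v p K vs dr i) (urn_draws p K vs)
      = map_pmf (\<lambda>f. card {x\<in>{..<n}. f x}) (map_pmf (\<lambda>h. (\<lambda>x. x = i) \<circ> h) (Pi_pmf {..<n} 0 (\<lambda>_. c)))"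
    unfolding pmf.map_comp urn_draws_def c_def n_def tilde_v_def
    by (intro pmf.map_cong refl) (simp add: o_def conj_commute)
  also have "map_pmf (\<lambda>h. (\<lambda>x. x = i) \<circ> h) (Pi_pmf {..<n} 0 (\<lambda>_. c))
      = Pi_pmf {..<n} (0 = i) (\<lambda>_. map_pmf (\<lambda>x. x = i) c)"
    by (rule Pi_pmf_map[symmetric]) auto
  also have "\<dots> = Pi_pmf {..<n} (0 = i) (\<lambda>_. bernoulli_pmf (pmf c i))"
    by (simp add: map_eq_bernoulli)
  also have "map_pmf (\<lambda>f. card {x\<in>{..<n}. f x}) \<dots> = binomial_pmf n (pmf c i)"
    by (rule binomial_pmf_altdef'[symmetric]) (auto simp: pmf_le_1)
  finally show ?thesis unfolding c_def n_def urn_color_pmf[OF assms] .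
qed


lemma card_filter_sum:
  fixes K :: nat shows "real (card {i. i < K \<and> P i}) = (\<Sum>i<K. if P i then 1 else 0)"
proof -
  have "{i. i < K \<and> P i} = {i\<in>{..<K}. P i}" by auto
  then have "real (card {i. i < K \<and> P i}) = (\<Sum>i\<in>{i\<in>{..<K}. P i}. 1)" by simp
  also have "\<dots> = (\<Sum>i<K. if P i then 1 else 0)"
    by (rule sum.inter_filter) (rule finite_lessThan)
  finally show ?thesis .
qed

lemma EW_cond:
  assumes "\<forall>l<K. vs l \<ge> 1"
  shows "measure_pmf.expectation (urn_draws p K vs) (\<lambda>dr. real (W_plus p K j vs dr))
     = (\<Sum>i<K. \<Sum>k\<le>n_draws p K vs. bn (n_draws p K vs) (real (vs i) / real (total_V K vs)) k * (if j \<le> k then 1 else 0))"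
proof -
  have "measure_pmf.expectation (urn_draws p K vs) (\<lambda>dr. real (W_plus p K j vs dr))
     = measure_pmf.expectation (urn_draws p K vs) (\<lambda>dr. \<Sum>i<K. if j \<le> tilde_v p K vs dr i then 1 else 0)"
    unfolding W_plus_def card_filter_sum ..
  also have "\<dots> = (\<Sum>i<K. measure_pmf.expectation (urn_draws p K vs) (\<lambda>dr. if j \<le> tilde_v p K vs dr i then 1 else 0))"
    by (rule Bochner_Integration.integral_sum) (rule pmf_integrable_bounded[where B=1], simp)
  also have "\<dots> = (\<Sum>i<K. \<Sum>k\<le>n_draws p K vs. bn (n_draws p K vs) (real (vs i) / real (total_V K vs)) k * (if j \<le> k then 1 else 0))"
  proof (intro sum.cong refl)
    fix i assume i: "i \<in> {..<K}"
    let ?q = "real (vs i) / real (total_V K vs)"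
    have q01: "?q \<in> {0..1}"
    proof -
      have a: "vs i \<le> total_V K vs" using total_V_ge[OF assms, of i] i by auto
      have "vs i \<ge> 1" using assms i by auto
      then show ?thesis using a by (auto simp: divide_le_eq)
    qed
    have "measure_pmf.expectation (urn_draws p K vs) (\<lambda>dr. if j \<le> tilde_v p K vs dr i then 1 else 0)
        = measure_pmf.expectation (map_pmf (\<lambda>dr. tilde_v p K vs dr i) (urn_draws p K vs)) (\<lambda>k. if j \<le> k then 1 else 0 :: real)"
      by simp
    also have "\<dots> = measure_pmf.expectation (binomial_pmf (n_draws p K vs) ?q) (\<lambda>k. if j \<le> k then 1 else 0 :: real)"
      using i assms by (subst tilde_dist) auto
    also have "\<dots> = (\<Sum>k\<le>n_draws p K vs. bn (n_draws p K vs) ?q k * (if j \<le> k then 1 else 0))"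
      using q01 by (subst expectation_binomial_pmf') (auto simp: bn_def)
    finally show "measure_pmf.expectation (urn_draws p K vs) (\<lambda>dr. if j \<le> tilde_v p K vs dr i then 1 else 0)
        = (\<Sum>k\<le>n_draws p K vs. bn (n_draws p K vs) ?q k * (if j \<le> k then 1 else 0))" .
  qed
  finally show ?thesis .
qed


lemma poi_nonneg: "lam \<ge> 0 \<Longrightarrow> poi lam k \<ge> 0"
  by (simp add: poi_def)

lemma Fl_nonneg: "lam \<ge> 0 \<Longrightarrow> Fl lam k \<ge> 0"
  unfolding Fl_def by (intro sum_nonneg poi_nonneg)

lemma poi_partial_le:
  assumes "lam \<ge> 0"
  shows "(\<Sum>l<N. poi lam (l + j)) \<le> 1 - Fl lam j" "(\<Sum>l<N. poi lam (l + j)) \<ge> 0"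
proof -
  have s: "(\<lambda>l. poi lam (l + j)) sums (1 - Fl lam j)" by (rule poi_tail_sums)
  have "(\<Sum>l<N. poi lam (l + j)) \<le> suminf (\<lambda>l. poi lam (l + j))"
    using s assms sums_summable[OF poi_sums[of lam]]
    by (intro sum_le_suminf[of "\<lambda>l. poi lam (l + j)"]) (auto simp: sums_summable poi_nonneg)
  then show "(\<Sum>l<N. poi lam (l + j)) \<le> 1 - Fl lam j" using sums_unique[OF s] by simp
  show "(\<Sum>l<N. poi lam (l + j)) \<ge> 0" using assms by (intro sum_nonneg poi_nonneg)
qed

lemma poi_le_1: "lam \<ge> 0 \<Longrightarrow> poi lam k \<le> 1"
  using poi_partial_le(1)[of lam k 1] Fl_nonneg[of lam k] by simp

lemma Q_eq: "Q d p l = measure_pmf.expectation d (\<lambda>v. poi (p * real v) l)"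
  unfolding Q_def poi_def by (intro Bochner_Integration.integral_cong refl) (simp add: algebra_simps)

lemma Q_sum:
  assumes "p \<ge> 0"
  shows "(\<Sum>l. Q d p (l + j)) = measure_pmf.expectation d (\<lambda>v. 1 - Fl (p * real v) j)"
proof -
  have nn: "p * real v \<ge> 0" for v using assms by simp
  have ps: "(\<Sum>l<N. Q d p (l + j)) = measure_pmf.expectation d (\<lambda>v. \<Sum>l<N. poi (p * real v) (l + j))" for N
    unfolding Q_eq
    by (rule Bochner_Integration.integral_sum[symmetric])
       (rule pmf_integrable_bounded[where B=1],
        use poi_le_1[OF nn] poi_nonneg[OF nn] in \<open>auto\<close>)
  have "(\<lambda>N. measure_pmf.expectation d (\<lambda>v. \<Sum>l<N. poi (p * real v) (l + j)))
          \<longlonglongrightarrow> measure_pmf.expectation d (\<lambda>v. 1 - Fl (p * real v) j)"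
  proof (rule integral_dominated_convergence[where w="\<lambda>_. 1"])
    show "AE v in measure_pmf d. (\<lambda>N. \<Sum>l<N. poi (p * real v) (l + j)) \<longlonglongrightarrow> 1 - Fl (p * real v) j"
      using poi_tail_sums by (auto simp: sums_def)
    show "AE v in measure_pmf d. norm (\<Sum>l<N. poi (p * real v) (l + j)) \<le> 1" for N
    proof (intro AE_I2)
      fix v
      have a: "(\<Sum>l<N. poi (p * real v) (l + j)) \<le> 1 - Fl (p * real v) j"
        and b: "0 \<le> (\<Sum>l<N. poi (p * real v) (l + j))" using poi_partial_le[OF nn] by auto
      have c: "0 \<le> Fl (p * real v) j" using Fl_nonneg[OF nn] .
      show "norm (\<Sum>l<N. poi (p * real v) (l + j)) \<le> 1" using a b c by simp
    qed
  qed auto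
  then have "(\<lambda>l. Q d p (l + j)) sums measure_pmf.expectation d (\<lambda>v. 1 - Fl (p * real v) j)"
    unfolding sums_def ps .
  then show ?thesis by (rule sums_unique[symmetric])
qed


lemma iid_marginal:
  fixes f :: "nat \<Rightarrow> real"
  assumes "i < K"
  shows "measure_pmf.expectation (iid_vs d K) (\<lambda>vs. f (vs i)) = measure_pmf.expectation d f"
proof -
  have "measure_pmf.expectation (iid_vs d K) (\<lambda>vs. f (vs i))
      = measure_pmf.expectation (map_pmf (\<lambda>vs. vs i) (iid_vs d K)) f" by simp
  also have "map_pmf (\<lambda>vs. vs i) (iid_vs d K) = d"
    unfolding iid_vs_def using assms by (subst Pi_pmf_component) auto
  finally show ?thesis .
qed

lemma iid_swap:
  fixes F :: "(nat \<Rightarrow> nat) \<Rightarrow> nat \<Rightarrow> real"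
  assumes "i < K"
    and inv: "\<And>vs. F (\<lambda>x. vs (if x = 0 then i else if x = i then 0 else x)) 0 = F vs i"
  shows "measure_pmf.expectation (iid_vs d K) (\<lambda>vs. F vs i) = measure_pmf.expectation (iid_vs d K) (\<lambda>vs. F vs 0)"
proof -
  define h where "h = (\<lambda>x::nat. if x = 0 then i else if x = i then 0 else x)"
  have hh: "h (h x) = x" for x by (simp add: h_def)
  have bij: "bij_betw h {..<K} {..<K}"
    by (rule bij_betwI[where g=h]) (use assms in \<open>auto simp: h_def hh\<close>)
  have out: "x \<notin> {..<K} \<Longrightarrow> h x \<notin> {..<K}" for x using assms by (auto simp: h_def)
  have "iid_vs d K = map_pmf (\<lambda>g. g \<circ> h) (iid_vs d K)"
    unfolding iid_vs_def by (rule Pi_pmf_bij_betw) (use bij out in auto)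
  then have "measure_pmf.expectation (iid_vs d K) (\<lambda>vs. F vs 0)
      = measure_pmf.expectation (map_pmf (\<lambda>g. g \<circ> h) (iid_vs d K)) (\<lambda>vs. F vs 0)" by simp
  also have "\<dots> = measure_pmf.expectation (iid_vs d K) (\<lambda>vs. F (vs \<circ> h) 0)" by simp
  also have "\<dots> = measure_pmf.expectation (iid_vs d K) (\<lambda>vs. F vs i)"
    using inv by (simp add: o_def h_def)
  finally show ?thesis by simp
qed

lemma total_V_swap:
  assumes "i < K"
  shows "total_V K (\<lambda>x. vs (if x = 0 then i else if x = i then 0 else x)) = total_V K vs"
proof -
  define h where "h = (\<lambda>x::nat. if x = 0 then i else if x = i then 0 else x)"
  have hh: "h (h x) = x" for x by (simp add: h_def)
  have bij: "bij_betw h {..<K} {..<K}"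
    by (rule bij_betwI[where g=h]) (use assms in \<open>auto simp: h_def hh\<close>)
  have "(\<Sum>x<K. vs (h x)) = (\<Sum>x<K. vs x)"
    using sum.reindex_bij_betw[OF bij, of vs] by simp
  then show ?thesis unfolding total_V_def h_def .
qed


lemma support_iid:
  assumes "vs \<in> set_pmf (iid_vs d K)" "l < K"
  shows "vs l \<in> set_pmf d"
  using assms unfolding iid_vs_def by (auto simp: set_Pi_pmf PiE_dflt_def)

lemma n_draws_real:
  assumes "p > 0" "p * real (total_V K vs) \<in> \<int>"
  shows "real (n_draws p K vs) = p * real (total_V K vs)"
proof -
  from assms(2) obtain z where z: "p * real (total_V K vs) = of_int z" by (auto elim: Ints_cases)
  have "z \<ge> 0" using z assms(1) by (metis mult_nonneg_nonneg of_int_0_le_iff of_nat_0_le_iff order_less_imp_le)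
  then show ?thesis unfolding n_draws_def z by simp
qed

lemma one_minus_exp_le_min: "x \<ge> 0 \<Longrightarrow> 1 - exp (- x) \<le> min x (1::real)"
  using exp_ge_add_one_self[of "- x"] by (simp add: min_def)

lemma inner_bounds:
  assumes "0 \<le> q" "q \<le> 1"
  shows "0 \<le> (\<Sum>k\<le>n. bn n q k * (if j \<le> k then 1 else 0))" "(\<Sum>k\<le>n. bn n q k * (if j \<le> k then 1 else (0::real))) \<le> 1"
proof -
  show "0 \<le> (\<Sum>k\<le>n. bn n q k * (if j \<le> k then 1 else 0))"
    using bn_nonneg[OF assms] by (intro sum_nonneg) auto
  have "(\<Sum>k\<le>n. bn n q k * (if j \<le> k then 1 else (0::real))) \<le> (\<Sum>k\<le>n. bn n q k)"
    using bn_nonneg[OF assms] by (intro sum_mono) auto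
  then show "(\<Sum>k\<le>n. bn n q k * (if j \<le> k then 1 else (0::real))) \<le> 1" using bn_sum by simp
qed

lemma pointwise_term:
  assumes vs: "\<forall>l<K. vs l \<ge> 1" and i: "i < K" and p: "0 < p" and pV: "p * real (total_V K vs) \<in> \<int>"
  shows "\<bar>(\<Sum>k\<le>n_draws p K vs. bn (n_draws p K vs) (real (vs i) / real (total_V K vs)) k * (if j \<le> k then 1 else 0))
            - (1 - Fl (p * real (vs i)) j)\<bar>
         \<le> min (p * real (vs i)) 1 * real (vs i) / real (total_V K vs)"
proof -
  define V where "V = total_V K vs"
  define n where "n = n_draws p K vs"
  define q where "q = real (vs i) / real V"
  have vi: "vs i \<ge> 1" using vs i by auto
  have Vge: "vs i \<le> V" unfolding V_def using total_V_ge[OF vs i] .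
  have Vpos: "real V > 0" using vi Vge by simp
  have q: "0 < q" "q \<le> 1" unfolding q_def using vi Vge Vpos by (auto simp: divide_le_eq)
  have nr: "real n = p * real V" unfolding n_def V_def by (rule n_draws_real[OF p pV])
  have n1: "n \<ge> 1"
  proof -
    have "real n > 0" using nr p Vpos by simp
    then show ?thesis by simp
  qed
  have nq: "real n * q = p * real (vs i)" unfolding nr q_def using Vpos by simp
  have "\<bar>(\<Sum>k\<le>n. bn n q k * (if j \<le> k then 1 else 0)) - (1 - Fl (real n * q) j)\<bar> \<le> q * (1 - exp (- (real n * q)))"
    by (rule binom_poisson_tail[OF q n1])
  also have "\<dots> \<le> q * min (p * real (vs i)) 1"
    unfolding nq using q p by (intro mult_left_mono one_minus_exp_le_min) auto
  also have "\<dots> = min (p * real (vs i)) 1 * real (vs i) / real V" unfolding q_def by simp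
  finally have h: "\<bar>(\<Sum>k\<le>n. bn n q k * (if j \<le> k then 1 else 0)) - (1 - Fl (real n * q) j)\<bar>
     \<le> min (p * real (vs i)) 1 * real (vs i) / real V" .
  show ?thesis using h unfolding nq unfolding n_def q_def V_def .
qed


theorem mainTheorem3:
  fixes d :: "nat pmf" and K j :: nat and p :: real
  assumes pos: "\<forall>n \<in> set_pmf d. n \<ge> 1"
    and K: "K \<ge> 1"
    and p: "0 < p" "p < 1"
    and pV_int: "\<forall>vs. (\<forall>i<K. vs i \<in> set_pmf d) \<longrightarrow> p * real (total_V K vs) \<in> \<int>"
  shows "\<bar>measure_pmf.expectation (urn_experiment d K p)
              (\<lambda>(vs, dr). real (W_plus p K j vs dr)) / real K
           - (\<Sum>l. Q d p (l + j))\<bar>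
         \<le> measure_pmf.expectation (iid_vs d K)
              (\<lambda>vs. min (p * real (vs 0)) 1 * real (vs 0) / real (total_V K vs))"
proof -
  define I where "I = iid_vs d K"
  define A where "A = (\<lambda>vs. \<Sum>i<K. \<Sum>k\<le>n_draws p K vs. bn (n_draws p K vs) (real (vs i) / real (total_V K vs)) k * (if j \<le> k then 1 else (0::real)))"
  define T where "T = (\<lambda>(vs::nat\<Rightarrow>nat) (i::nat). 1 - Fl (p * real (vs i)) j)"
  define Bf where "Bf = (\<lambda>vs. \<Sum>i<K. T vs i)"
  define c where "c = (\<lambda>(vs::nat\<Rightarrow>nat) (i::nat). min (p * real (vs i)) 1 * real (vs i) / real (total_V K vs))"
  define C where "C = (\<lambda>vs. \<Sum>i<K. c vs i)"
  have supp: "\<forall>l<K. vs l \<ge> 1" "\<forall>l<K. vs l \<in> set_pmf d" if "vs \<in> set_pmf I" for vs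
    using support_iid[of vs d K] that pos unfolding I_def by auto
  have Kpos: "real K > 0" using K by simp
  have Tb: "0 \<le> T vs i \<and> T vs i \<le> 1" if "vs \<in> set_pmf I" "i < K" for vs i
  proof -
    have "p * real (vs i) > 0" using supp(1)[OF that(1)] that(2) p by auto
    then show ?thesis unfolding T_def using tail_nonneg[of "p * real (vs i)" j] Fl_nonneg[of "p * real (vs i)" j] by auto
  qed
  have qb: "0 \<le> real (vs i) / real (total_V K vs) \<and> real (vs i) / real (total_V K vs) \<le> 1"
    if "vs \<in> set_pmf I" "i < K" for vs i
  proof -
    have "vs i \<le> total_V K vs" using total_V_ge[OF supp(1)[OF that(1)] that(2)] .
    moreover have "vs i \<ge> 1" using supp(1)[OF that(1)] that(2) by auto
    ultimately show ?thesis by (auto simp: divide_le_eq)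
  qed
  have cb: "0 \<le> c vs i \<and> c vs i \<le> 1" if "vs \<in> set_pmf I" "i < K" for vs i
  proof -
    have m0: "min (p * real (vs i)) 1 \<ge> 0" "min (p * real (vs i)) 1 \<le> 1" using p by auto
    have le: "min (p * real (vs i)) 1 * (real (vs i) / real (total_V K vs)) \<le> 1 * 1"
      by (rule mult_mono) (use m0 qb[OF that] in auto)
    have ge: "0 \<le> min (p * real (vs i)) 1 * (real (vs i) / real (total_V K vs))"
      by (rule mult_nonneg_nonneg) (use m0 qb[OF that] in auto)
    note le ge
    moreover have "c vs i = min (p * real (vs i)) 1 * (real (vs i) / real (total_V K vs))"
      unfolding c_def by simp
    ultimately show ?thesis by linarith
  qed
  have Ab: "\<bar>A vs\<bar> \<le> real K" if "vs \<in> set_pmf I" for vs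
  proof -
    have "\<bar>A vs\<bar> \<le> (\<Sum>i<K. \<bar>\<Sum>k\<le>n_draws p K vs. bn (n_draws p K vs) (real (vs i) / real (total_V K vs)) k * (if j \<le> k then 1 else (0::real))\<bar>)"
      unfolding A_def by (rule sum_abs)
    also have "\<dots> \<le> (\<Sum>i<K. 1)"
    proof (intro sum_mono)
      fix i assume i: "i \<in> {..<K}"
      have qq: "0 \<le> real (vs i) / real (total_V K vs)" "real (vs i) / real (total_V K vs) \<le> 1"
        using qb[OF that] i by auto
      show "\<bar>\<Sum>k\<le>n_draws p K vs. bn (n_draws p K vs) (real (vs i) / real (total_V K vs)) k * (if j \<le> k then 1 else (0::real))\<bar> \<le> 1"
        using inner_bounds[OF qq, of "n_draws p K vs" j] by (subst abs_of_nonneg) auto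
    qed
    finally show ?thesis by simp
  qed
  have Bb: "\<bar>Bf vs\<bar> \<le> real K" if "vs \<in> set_pmf I" for vs
  proof -
    have "\<bar>Bf vs\<bar> \<le> (\<Sum>i<K. \<bar>T vs i\<bar>)" unfolding Bf_def by (rule sum_abs)
    also have "\<dots> \<le> (\<Sum>i<K. 1)" using Tb[OF that] by (intro sum_mono) auto
    finally show ?thesis by simp
  qed
  have Cb: "\<bar>C vs\<bar> \<le> real K" if "vs \<in> set_pmf I" for vs
  proof -
    have "\<bar>C vs\<bar> \<le> (\<Sum>i<K. \<bar>c vs i\<bar>)" unfolding C_def by (rule sum_abs)
    also have "\<dots> \<le> (\<Sum>i<K. 1)" using cb[OF that] by (intro sum_mono) auto
    finally show ?thesis by simp
  qed
  have intA: "integrable I A" by (rule pmf_integrable_bounded[OF Ab])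
  have intB: "integrable I Bf" by (rule pmf_integrable_bounded[OF Bb])
  have intC: "integrable I C" by (rule pmf_integrable_bounded[OF Cb])
  have intT: "integrable I (\<lambda>vs. T vs i)" if "i < K" for i
    by (rule pmf_integrable_bounded[where B=1]) (use Tb that in auto)
  have intc: "integrable I (\<lambda>vs. c vs i)" if "i < K" for i
    by (rule pmf_integrable_bounded[where B=1]) (use cb that in auto)
  have Wb: "\<bar>real (W_plus p K j vs dr)\<bar> \<le> real K" for vs dr
  proof -
    have "W_plus p K j vs dr \<le> card {..<K}" unfolding W_plus_def by (intro card_mono) auto
    then show ?thesis by simp
  qed
  have E1: "measure_pmf.expectation (urn_experiment d K p) (\<lambda>(vs, dr). real (W_plus p K j vs dr)) = measure_pmf.expectation I A"
  proof -
    have ue: "urn_experiment d K p = bind_pmf I (\<lambda>vs. map_pmf (\<lambda>dr. (vs, dr)) (urn_draws p K vs))"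
      unfolding urn_experiment_def I_def map_pmf_def ..
    have "measure_pmf.expectation (urn_experiment d K p) (\<lambda>(vs, dr). real (W_plus p K j vs dr))
       = measure_pmf.expectation I (\<lambda>vs. measure_pmf.expectation (map_pmf (\<lambda>dr. (vs, dr)) (urn_draws p K vs)) (\<lambda>(vs, dr). real (W_plus p K j vs dr)))"
      unfolding ue by (rule expectation_bind_pmf_bounded[where B="real K"]) (use Wb in auto)
    also have "\<dots> = measure_pmf.expectation I (\<lambda>vs. measure_pmf.expectation (urn_draws p K vs) (\<lambda>dr. real (W_plus p K j vs dr)))"
      by simp
    also have "\<dots> = measure_pmf.expectation I A"
      by (rule pmf_integral_cong) (simp add: A_def EW_cond[OF supp(1)])
    finally show ?thesis .
  qed
  have E2: "real K * (\<Sum>l. Q d p (l + j)) = measure_pmf.expectation I Bf"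
  proof -
    have "(\<Sum>l. Q d p (l + j)) = measure_pmf.expectation d (\<lambda>v. 1 - Fl (p * real v) j)"
      using p by (intro Q_sum) auto
    then have e: "(\<Sum>l. Q d p (l + j)) = measure_pmf.expectation I (\<lambda>vs. T vs i)" if "i < K" for i
      unfolding I_def T_def using iid_marginal[OF that, where f="\<lambda>v. 1 - Fl (p * real v) j" and d=d] by simp
    have "real K * (\<Sum>l. Q d p (l + j)) = (\<Sum>i<K. (\<Sum>l. Q d p (l + j)))" by simp
    also have "\<dots> = (\<Sum>i<K. measure_pmf.expectation I (\<lambda>vs. T vs i))"
      by (intro sum.cong refl) (metis e lessThan_iff)
    also have "\<dots> = measure_pmf.expectation I Bf"
      unfolding Bf_def by (rule Bochner_Integration.integral_sum[symmetric]) (use intT in auto)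
    finally show ?thesis .
  qed
  have E3: "real K * measure_pmf.expectation I (\<lambda>vs. c vs 0) = measure_pmf.expectation I C"
  proof -
    have e: "measure_pmf.expectation I (\<lambda>vs. c vs i) = measure_pmf.expectation I (\<lambda>vs. c vs 0)" if "i < K" for i
      unfolding I_def
      by (rule iid_swap[OF that]) (simp add: c_def total_V_swap[OF that])
    have "real K * measure_pmf.expectation I (\<lambda>vs. c vs 0) = (\<Sum>i<K. measure_pmf.expectation I (\<lambda>vs. c vs 0))" by simp
    also have "\<dots> = (\<Sum>i<K. measure_pmf.expectation I (\<lambda>vs. c vs i))"
      by (intro sum.cong refl) (metis e lessThan_iff)
    also have "\<dots> = measure_pmf.expectation I C"
      unfolding C_def by (rule Bochner_Integration.integral_sum[symmetric]) (use intc in auto)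
    finally show ?thesis .
  qed
  have E4: "\<bar>measure_pmf.expectation I A - measure_pmf.expectation I Bf\<bar> \<le> measure_pmf.expectation I C"
  proof -
    have "measure_pmf.expectation I A - measure_pmf.expectation I Bf = measure_pmf.expectation I (\<lambda>vs. A vs - Bf vs)"
      by (rule Bochner_Integration.integral_diff[symmetric, OF intA intB])
    also have "\<bar>\<dots>\<bar> \<le> measure_pmf.expectation I (\<lambda>vs. \<bar>A vs - Bf vs\<bar>)"
      by (rule integral_abs_bound)
    also have "\<dots> \<le> measure_pmf.expectation I C"
    proof (rule integral_mono_AE)
      show "integrable I (\<lambda>vs. \<bar>A vs - Bf vs\<bar>)" using intA intB by auto
      show "integrable I C" by (rule intC)
      show "AE vs in measure_pmf I. \<bar>A vs - Bf vs\<bar> \<le> C vs"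
        unfolding AE_measure_pmf_iff
      proof
        fix vs assume vs: "vs \<in> set_pmf I"
        have pV: "p * real (total_V K vs) \<in> \<int>" using pV_int supp(2)[OF vs] by blast
        have "\<bar>A vs - Bf vs\<bar> = \<bar>\<Sum>i<K. (\<Sum>k\<le>n_draws p K vs. bn (n_draws p K vs) (real (vs i) / real (total_V K vs)) k * (if j \<le> k then 1 else 0)) - T vs i\<bar>"
          unfolding A_def Bf_def by (simp add: sum_subtractf)
        also have "\<dots> \<le> (\<Sum>i<K. \<bar>(\<Sum>k\<le>n_draws p K vs. bn (n_draws p K vs) (real (vs i) / real (total_V K vs)) k * (if j \<le> k then 1 else 0)) - T vs i\<bar>)"
          by (rule sum_abs)
        also have "\<dots> \<le> C vs"
          unfolding C_def T_def c_def
          by (intro sum_mono pointwise_term[OF supp(1)[OF vs] _ p(1) pV]) auto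
        finally show "\<bar>A vs - Bf vs\<bar> \<le> C vs" .
      qed
    qed
    finally show ?thesis .
  qed
  have "\<bar>measure_pmf.expectation I A / real K - (\<Sum>l. Q d p (l + j))\<bar>
      = \<bar>measure_pmf.expectation I A - measure_pmf.expectation I Bf\<bar> / real K"
  proof -
    have "(\<Sum>l. Q d p (l + j)) = measure_pmf.expectation I Bf / real K" using E2 Kpos by (simp add: field_simps)
    then show ?thesis using Kpos by (simp add: diff_divide_distrib[symmetric] abs_divide)
  qed
  also have "\<dots> \<le> measure_pmf.expectation I C / real K"
    using E4 Kpos by (simp add: divide_right_mono)
  also have "\<dots> = measure_pmf.expectation I (\<lambda>vs. c vs 0)" using E3 Kpos by (simp add: field_simps)
  finally show ?thesis unfolding E1 c_def I_def .
qed


end
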